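(* Let $W_0$, $W_1$, $W_2$ be the abstract Coxeter groups with the following Coxeter graphs on four nodes: - $W_0=[\infty,3,3]$: linear graph $s_1 - s_2 - s_3 - s_4$ with $m_{12}=\infty$, $m_{23}=m_{34}=3$, all other pairs commuting; - $W_1=[3,\infty,3]$: linear graph $s_1 - s_2 - s_3 - s_4$ with $m_{12}=3$, $m_{23}=\infty$, $m_{34}=3$, all other pairs commuting; - $W_2=[\infty,3^{1,1}]$: a central node $s_2$ joined to $s_1$ by an edge with $m_{12}=\infty$ and to $s_3,s_4$ by edges with $m_{23}=m_{24}=3$, all other pairs commuting. Then their growth rates satisfy $\tau_{W_0}<\tau_{W_1}$ and $\tau_{W_0}<\tau_{W_2}$.
   Context: For a Coxeter system $(W,S)$ (group $W$ generated by a finite set $S$ with relations $s^2=1$ and $(ss')^{m_{ss'}}=1$, $m_{ss'}\in\{2,3,\dots,\infty\}$), the growth series is $f_S(t)=1+\sum_{k\ge1}a_kt^k$ with $a_k$ the number of elements of $S$-word length $k$, and the growth rate $\tau_W$ is the inverse of the radius of convergence of $f_S(t)$ (equivalently $\limsup_k a_k^{1/k}$). *)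

theory Defs
  imports "HOL-Analysis.Analysis" "HOL-Library.Extended_Nat"
begin

text \<open>Generators of a Coxeter system with n generators are 0,...,n-1; words are lists.
  The Coxeter matrix is m :: nat => nat => enat (\<infinity> = no relation).\<close>

fun alt_word :: "nat \<Rightarrow> nat \<Rightarrow> nat \<Rightarrow> nat list" where
  "alt_word s t 0 = []"
| "alt_word s t (Suc k) = s # alt_word t s k"

definition cox_rel :: "nat \<Rightarrow> (nat \<Rightarrow> nat \<Rightarrow> enat) \<Rightarrow> nat list \<Rightarrow> bool" where
  "cox_rel n m r \<longleftrightarrow>
     (\<exists>s<n. r = [s, s]) \<or>
     (\<exists>s<n. \<exists>t<n. \<exists>k::nat. s \<noteq> t \<and> m s t = enat k \<and> r = alt_word s t (2 * k))"

inductive cox_eq :: "nat \<Rightarrow> (nat \<Rightarrow> nat \<Rightarrow> enat) \<Rightarrow> nat list \<Rightarrow> nat list \<Rightarrow> bool"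
  for n m where
  refl: "cox_eq n m w w"
| sym: "cox_eq n m u v \<Longrightarrow> cox_eq n m v u"
| trans: "cox_eq n m u v \<Longrightarrow> cox_eq n m v w \<Longrightarrow> cox_eq n m u w"
| rel: "cox_rel n m r \<Longrightarrow> cox_eq n m (u @ r @ v) (u @ v)"

definition cox_words :: "nat \<Rightarrow> nat list set" where
  "cox_words n = lists {..<n}"

definition cox_elem :: "nat \<Rightarrow> (nat \<Rightarrow> nat \<Rightarrow> enat) \<Rightarrow> nat list \<Rightarrow> nat list set" where
  "cox_elem n m w = {v \<in> cox_words n. cox_eq n m v w}"

definition growth_coeff :: "nat \<Rightarrow> (nat \<Rightarrow> nat \<Rightarrow> enat) \<Rightarrow> nat \<Rightarrow> nat" where
  "growth_coeff n m k = card (cox_elem n m `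
      {w \<in> cox_words n. length w = k \<and> (\<forall>v \<in> cox_words n. cox_eq n m v w \<longrightarrow> k \<le> length v)})"

text \<open>Growth rate: limsup of a_k^(1/k) (= inverse radius of convergence of the growth series).\<close>
definition growth_rate :: "nat \<Rightarrow> (nat \<Rightarrow> nat \<Rightarrow> enat) \<Rightarrow> ereal" where
  "growth_rate n m = limsup (\<lambda>k. ereal (root k (real (growth_coeff n m k))))"

text \<open>Coxeter matrices (off-diagonal entries) of the three groups; s_1..s_4 are 0..3.\<close>
definition m_W0 :: "nat \<Rightarrow> nat \<Rightarrow> enat" where
  "m_W0 i j = (if {i, j} = {0, 1} then \<infinity>
               else if {i, j} = {1, 2} \<or> {i, j} = {2, 3} then 3 else 2)"

definition m_W1 :: "nat \<Rightarrow> nat \<Rightarrow> enat" where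
  "m_W1 i j = (if {i, j} = {1, 2} then \<infinity>
               else if {i, j} = {0, 1} \<or> {i, j} = {2, 3} then 3 else 2)"

definition m_W2 :: "nat \<Rightarrow> nat \<Rightarrow> enat" where
  "m_W2 i j = (if {i, j} = {0, 1} then \<infinity>
               else if {i, j} = {1, 2} \<or> {i, j} = {1, 3} then 3 else 2)"

end

theory Submission
  imports Defs "HOL-Real_Asymp.Real_Asymp"
begin

lemma cox_eq_cong: "cox_eq n m u v \<Longrightarrow> cox_eq n m (x@u@y) (x@v@y)"
proof (induction rule: cox_eq.induct)
  case (refl w) then show ?case by (rule cox_eq.refl)
next
  case (sym u v) then show ?case by (blast intro: cox_eq.sym)
next
  case (trans u v w) then show ?case by (metis cox_eq.trans)
next
  case (rel r u v) then show ?case using cox_eq.rel[of n m r "x@u" "v@y"] by simp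
qed

lemma cox_eq_rel': "cox_rel n m r \<Longrightarrow> cox_eq n m (u @ v) (u @ r @ v)"
  by (rule cox_eq.sym, rule cox_eq.rel)

lemma del_eq: "s < n \<Longrightarrow> cox_eq n m [s,s] []"
  using cox_eq.rel[of n m "[s,s]" "[]" "[]"] by (auto simp: cox_rel_def)

lemma comm_eq:
  assumes "s < n" "t < n" "s \<noteq> t" "m s t = 2"
  shows "cox_eq n m [s,t] [t,s]"
proof -
  have a: "alt_word s t (2*2) = [s,t,s,t]" by (simp add: numeral_eq_Suc)
  have e: "m s t = enat 2" using assms(4) by (simp add: numeral_eq_enat)
  have r: "cox_rel n m [s,t,s,t]" unfolding cox_rel_def using assms(1-3) e a by metis
  have 1: "cox_eq n m [t,s,s,t,s,t] [t,s]" using cox_eq.rel[OF r, of "[t,s]" "[]"] by simp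
  have 2: "cox_eq n m [t,s,s,t,s,t] [t,t,s,t]"
    using cox_eq.rel[of n m "[s,s]" "[t]" "[t,s,t]"] assms by (simp add: cox_rel_def)
  have 3: "cox_eq n m [t,t,s,t] [s,t]"
    using cox_eq.rel[of n m "[t,t]" "[]" "[s,t]"] assms by (simp add: cox_rel_def)
  show ?thesis by (meson 1 2 3 cox_eq.sym cox_eq.trans)
qed

lemma braid_eq:
  assumes "s < n" "t < n" "s \<noteq> t" "m s t = 3"
  shows "cox_eq n m [s,t,s] [t,s,t]"
proof -
  have a: "alt_word s t (2*3) = [s,t,s,t,s,t]" by (simp add: numeral_eq_Suc)
  have e: "m s t = enat 3" using assms(4) by (simp add: numeral_eq_enat)
  have r: "cox_rel n m [s,t,s,t,s,t]" unfolding cox_rel_def using assms(1-3) e a by metis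
  have 1: "cox_eq n m [s,t,s,t,s,t,t,s,t] [t,s,t]" using cox_eq.rel[OF r, of "[]" "[t,s,t]"] by simp
  have 2: "cox_eq n m [s,t,s,t,s,t,t,s,t] [s,t,s,t,s,s,t]"
    using cox_eq.rel[of n m "[t,t]" "[s,t,s,t,s]" "[s,t]"] assms by (simp add: cox_rel_def)
  have 3: "cox_eq n m [s,t,s,t,s,s,t] [s,t,s,t,t]"
    using cox_eq.rel[of n m "[s,s]" "[s,t,s,t]" "[t]"] assms by (simp add: cox_rel_def)
  have 4: "cox_eq n m [s,t,s,t,t] [s,t,s]"
    using cox_eq.rel[of n m "[t,t]" "[s,t,s]" "[]"] assms by (simp add: cox_rel_def)
  show ?thesis by (meson 1 2 3 4 cox_eq.sym cox_eq.trans)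
qed

type_synonym v4 = "int \<times> int \<times> int \<times> int"

fun act1 :: "nat \<Rightarrow> v4 \<Rightarrow> v4" where
"act1 s (a,b,c,d) = (if s = 0 then (-a, b+a, c, d) else if s = 1 then (a+b, -b, c+2*b, d)
   else if s = 2 then (a, b+2*c, -c, d+c) else if s = 3 then (a, b, c+d, -d) else (a,b,c,d))"

definition phi1 :: "nat list \<Rightarrow> v4 \<Rightarrow> v4" where "phi1 w x = foldr act1 w x"

lemma four_cases: "(s::nat) < 4 \<Longrightarrow> s = 0 \<or> s = 1 \<or> s = 2 \<or> s = 3" by auto

lemma phi1_rel: assumes "cox_rel 4 m_W1 r" shows "phi1 r x = x"
proof -
  obtain a b c d where x: "x = (a,b,c,d)" by (cases x) auto
  from assms consider (sq) s where "s < 4" "r = [s,s]"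
    | (br) s t k where "s < 4" "t < 4" "s \<noteq> t" "m_W1 s t = enat k" "r = alt_word s t (2*k)"
    unfolding cox_rel_def by blast
  then show ?thesis
  proof cases
    case sq then show ?thesis using four_cases[of s] by (auto simp: phi1_def x)
  next
    case br
    from br(1,2,3) have "(s,t) \<in> {(0,1),(0,2),(0,3),(1,0),(1,2),(1,3),(2,0),(2,1),(2,3),(3,0),(3,1),(3,2)}"
      using four_cases[of s] four_cases[of t] by auto
    then have "k = 2 \<or> k = 3" using br(4)
      by (auto simp: m_W1_def doubleton_eq_iff numeral_eq_enat)
    with \<open>(s,t) \<in> _\<close> show ?thesis using br(4,5)
      by (auto simp: phi1_def x m_W1_def doubleton_eq_iff numeral_eq_enat eval_nat_numeral algebra_simps)
  qed
qed

lemma phi1_append: "phi1 (u@v) x = phi1 u (phi1 v x)" by (simp add: phi1_def)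

lemma phi1_eq: "cox_eq 4 m_W1 u v \<Longrightarrow> phi1 u = phi1 v"
proof (induction rule: cox_eq.induct)
  case (rel r u v) then show ?case using phi1_rel[OF rel] by (auto simp: phi1_append fun_eq_iff)
qed auto

fun inR1 :: "nat \<Rightarrow> v4 \<Rightarrow> bool" where
"inR1 p (a,b,c,d) = (if p = 0 then a+b>0 \<and> 2*b+c+d>0 \<and> -b>0 \<and> d>0 \<and> b+c>0
  else if p = 1 then a+b>0 \<and> -2*b-c-d>0 \<and> d>0 \<and> 3*b+2*c+d>0
  else if p = 2 then -a-b>0 \<and> 2*b+c+d>0 \<and> -2*b-c>0 \<and> a+2*b+c>0
  else -a-b>0 \<and> -2*b-c-d>0 \<and> d>0 \<and> a+2*b+c>0)"

definition blk1 :: "nat \<Rightarrow> nat list" where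
"blk1 p = (if p = 0 then [1,2] else if p = 1 then [1,2,3] else if p = 2 then [1,0,2] else [1,0,2,3])"

lemma pp1_img: assumes "p < 4" "q < 4" "inR1 q x" shows "inR1 p (phi1 (blk1 p) x)"
proof -
  obtain a b c d where x: "x = (a,b,c,d)" by (cases x) auto
  show ?thesis using four_cases[OF assms(1)] four_cases[OF assms(2)] assms(3)
    by (auto simp: x phi1_def blk1_def)
qed

lemma pp1_v0: assumes "p < 4" shows "inR1 p (phi1 (blk1 p) (1,1,1,1))"
  using four_cases[OF assms(1)] by (auto simp: phi1_def blk1_def)

lemma pp1_disj: assumes "p < 4" "q < 4" "inR1 p x" "inR1 q x" shows "p = q"
proof -
  obtain a b c d where x: "x = (a,b,c,d)" by (cases x) auto
  show ?thesis using four_cases[OF assms(1)] four_cases[OF assms(2)] assms(3,4)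
    by (auto simp: x)
qed

lemma cox_elem_eq: "cox_eq n m u v \<Longrightarrow> cox_elem n m u = cox_elem n m v"
  unfolding cox_elem_def by (auto intro: cox_eq.trans cox_eq.sym)

lemma finite_len_eq: "finite {w \<in> cox_words n. length w = j}"
  unfolding cox_words_def using finite_lists_length_eq[of "{..<n}" j] by (simp add: lists_eq_set)

lemma finite_len_le: "finite {w \<in> cox_words n. length w \<le> j}"
  unfolding cox_words_def using finite_lists_length_le[of "{..<n}" j] by (simp add: lists_eq_set)

lemma card_ball_le:
  "card (cox_elem n m ` {w \<in> cox_words n. length w \<le> k}) \<le> (\<Sum>j\<le>k. growth_coeff n m j)"
proof -
  define A where "A j = cox_elem n m ` {w \<in> cox_words n. length w = j \<and> (\<forall>v \<in> cox_words n. cox_eq n m v w \<longrightarrow> j \<le> length v)}" for j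
  have finA: "finite (A j)" for j
    unfolding A_def by (rule finite_imageI, rule finite_subset[OF _ finite_len_eq[of n j]]) auto
  have sub: "cox_elem n m ` {w \<in> cox_words n. length w \<le> k} \<subseteq> (\<Union>j\<in>{..k}. A j)"
  proof
    fix e assume "e \<in> cox_elem n m ` {w \<in> cox_words n. length w \<le> k}"
    then obtain w where w: "w \<in> cox_words n" "length w \<le> k" "e = cox_elem n m w" by auto
    define P where "P l = (\<exists>v\<in>cox_words n. cox_eq n m v w \<and> length v = l)" for l
    have Pw: "P (length w)" unfolding P_def using w(1) cox_eq.refl by blast
    define j where "j = (LEAST l. P l)"
    have "P j" unfolding j_def using Pw by (rule LeastI)
    then obtain v where v: "v \<in> cox_words n" "cox_eq n m v w" "length v = j" unfolding P_def by blast
    have jle: "j \<le> length w" unfolding j_def using Pw by (rule Least_le)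
    have minv: "\<forall>v' \<in> cox_words n. cox_eq n m v' v \<longrightarrow> j \<le> length v'"
    proof (intro ballI impI)
      fix v' assume "v' \<in> cox_words n" "cox_eq n m v' v"
      then have "P (length v')" unfolding P_def using v(2) cox_eq.trans by blast
      then show "j \<le> length v'" unfolding j_def by (rule Least_le)
    qed
    have "e = cox_elem n m v" using w(3) cox_elem_eq[OF v(2)] by simp
    then have "e \<in> A j" unfolding A_def using v minv by blast
    then show "e \<in> (\<Union>j\<in>{..k}. A j)" using jle w(2) by auto
  qed
  have "card (cox_elem n m ` {w \<in> cox_words n. length w \<le> k}) \<le> card (\<Union>j\<in>{..k}. A j)"
    by (rule card_mono[OF _ sub]) (auto intro: finA)
  also have "\<dots> \<le> (\<Sum>j\<le>k. card (A j))" by (rule card_UN_le) simp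
  also have "\<dots> = (\<Sum>j\<le>k. growth_coeff n m j)" unfolding A_def growth_coeff_def by simp
  finally show ?thesis .
qed

lemma asymp1: "filterlim (\<lambda>k::nat. (8/5::real)^k/4 - (79/50)^(k+1)/(29/50)) at_top at_top"
  by real_asymp

lemma rate_gt:
  assumes "\<And>k. k \<ge> 2 \<Longrightarrow> (8/5::real)^k/4 \<le> real (\<Sum>j\<le>k. growth_coeff n m j)"
  shows "growth_rate n m > ereal (31/20)"
proof (rule ccontr)
  let ?a = "\<lambda>j. real (growth_coeff n m j)"
  assume "\<not> growth_rate n m > ereal (31/20)"
  then have "growth_rate n m \<le> ereal (31/20)" by (simp add: not_less)
  then have "growth_rate n m < ereal (79/50)" by (rule le_less_trans) simp
  then have "eventually (\<lambda>k. ereal (root k (?a k)) < ereal (79/50)) sequentially"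
    unfolding growth_rate_def by (rule Limsup_lessD)
  then obtain K where K: "\<And>k. k \<ge> K \<Longrightarrow> root k (?a k) < 79/50"
    by (auto simp: eventually_sequentially)
  define K' where "K' = max K 1"
  have ak: "?a k \<le> (79/50)^k" if "k \<ge> K'" for k
  proof -
    have "k > 0" "k \<ge> K" using that by (auto simp: K'_def)
    have "?a k = root k (?a k) ^ k" using \<open>k > 0\<close> by (simp add: real_root_pow_pos2)
    also have "\<dots> \<le> (79/50)^k" using K[OF \<open>k \<ge> K\<close>]
      by (intro power_mono) (auto simp: real_root_ge_zero)
    finally show ?thesis .
  qed
  define A where "A = (\<Sum>j<K'. ?a j)"
  have bound: "(\<Sum>j\<le>k. ?a j) \<le> A + (79/50)^(k+1)/(29/50)" if "k \<ge> K'" for k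
  proof -
    have split: "{..k} = {..<K'} \<union> {K'..k}" using that by auto
    have "(\<Sum>j\<le>k. ?a j) = A + (\<Sum>j\<in>{K'..k}. ?a j)"
      unfolding A_def split by (subst sum.union_disjoint) auto
    also have "(\<Sum>j\<in>{K'..k}. ?a j) \<le> (\<Sum>j\<in>{K'..k}. (79/50::real)^j)"
      by (rule sum_mono) (auto intro: ak)
    also have "\<dots> \<le> (\<Sum>j<k+1. (79/50::real)^j)"
      by (rule sum_mono2) auto
    also have "\<dots> = ((79/50)^(k+1) - 1)/(79/50 - 1)"
      by (subst geometric_sum) auto
    also have "\<dots> \<le> (79/50)^(k+1)/(29/50)" by (simp add: divide_right_mono)
    finally show ?thesis by simp
  qed
  have "eventually (\<lambda>k. A < (8/5::real)^k/4 - (79/50)^(k+1)/(29/50)) sequentially"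
    using asymp1 by (simp add: filterlim_at_top_dense)
  then obtain K2 where K2: "\<And>k. k \<ge> K2 \<Longrightarrow> A < (8/5::real)^k/4 - (79/50)^(k+1)/(29/50)"
    by (auto simp: eventually_sequentially)
  define k where "k = max (max K2 K') 2"
  have "(8/5::real)^k/4 \<le> (\<Sum>j\<le>k. ?a j)" using assms[of k] by (simp add: k_def)
  also have "\<dots> \<le> A + (79/50)^(k+1)/(29/50)" using bound[of k] by (simp add: k_def)
  finally have c1: "(8/5::real)^k/4 \<le> A + (79/50)^(k+1)/(29/50)" .
  have "k \<ge> K2" by (simp add: k_def)
  from K2[OF this] c1 show False by linarith
qed

locale pingpong =
  fixes M :: "nat \<Rightarrow> nat \<Rightarrow> enat" and phi :: "nat list \<Rightarrow> v4 \<Rightarrow> v4"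
    and blk :: "nat \<Rightarrow> nat list" and inR :: "nat \<Rightarrow> v4 \<Rightarrow> bool" and v0 :: v4
  assumes phi_eq: "cox_eq 4 M u v \<Longrightarrow> phi u = phi v"
    and phi_app: "phi (u@v) x = phi u (phi v x)"
    and phi_nil: "phi [] x = x"
    and phi_inv: "phi [s] (phi [s] x) = x"
    and blk_len: "length (blk 0) = 2" "length (blk 1) = 3" "length (blk 2) = 3" "length (blk 3) = 4"
    and blk_set: "p < 4 \<Longrightarrow> set (blk p) \<subseteq> {..<4}"
    and img: "p < 4 \<Longrightarrow> q < 4 \<Longrightarrow> inR q x \<Longrightarrow> inR p (phi (blk p) x)"
    and pv0: "p < 4 \<Longrightarrow> inR p (phi (blk p) v0)"
    and disj: "p < 4 \<Longrightarrow> q < 4 \<Longrightarrow> inR p x \<Longrightarrow> inR q x \<Longrightarrow> p = q"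
begin

lemma phi_inj: "phi u x = phi u y \<Longrightarrow> x = y"
proof (induction u)
  case Nil then show ?case by (simp add: phi_nil)
next
  case (Cons a u)
  have "phi (a#u) x = phi [a] (phi u x)" "phi (a#u) y = phi [a] (phi u y)"
    using phi_app[of "[a]" u] by auto
  then have "phi [a] (phi [a] (phi u x)) = phi [a] (phi [a] (phi u y))" using Cons.prems by simp
  then have "phi u x = phi u y" by (simp add: phi_inv)
  then show ?case by (rule Cons.IH)
qed

lemma blk_len2: "p < 4 \<Longrightarrow> 2 \<le> length (blk p)"
  using four_cases[of p] blk_len by auto

definition blkw :: "nat list \<Rightarrow> nat list" where "blkw ps = concat (map blk ps)"

lemma blkw_simps[simp]: "blkw [] = []" "blkw (p#ps) = blk p @ blkw ps"
  by (auto simp: blkw_def)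

lemma len_blkw: "set ps \<subseteq> {..<4} \<Longrightarrow> 2 * length ps \<le> length (blkw ps)"
  by (induction ps) (auto dest: blk_len2)

lemma set_blkw: "set ps \<subseteq> {..<4} \<Longrightarrow> set (blkw ps) \<subseteq> {..<4}"
  by (induction ps) (auto dest: blk_set)

lemma reg: "ps \<noteq> [] \<Longrightarrow> set ps \<subseteq> {..<4} \<Longrightarrow> inR (hd ps) (phi (blkw ps) v0)"
proof (induction ps)
  case Nil then show ?case by simp
next
  case (Cons p ps)
  show ?case
  proof (cases "ps = []")
    case True then show ?thesis using pv0[of p] Cons.prems by (simp add: phi_nil)
  next
    case False
    then have "inR (hd ps) (phi (blkw ps) v0)" using Cons by auto
    moreover have "hd ps < 4" using False Cons.prems by (cases ps) auto
    ultimately show ?thesis using img[of p "hd ps"] Cons.prems by (simp add: phi_app)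
  qed
qed

lemma inj: "set ps \<subseteq> {..<4} \<Longrightarrow> set qs \<subseteq> {..<4} \<Longrightarrow> length (blkw ps) = length (blkw qs)
   \<Longrightarrow> phi (blkw ps) v0 = phi (blkw qs) v0 \<Longrightarrow> ps = qs"
proof (induction ps arbitrary: qs)
  case Nil
  then show ?case using len_blkw[of qs] by simp
next
  case (Cons p ps)
  have "qs \<noteq> []" using Cons.prems(3) blk_len2[of p] Cons.prems(1) by auto
  then obtain q qs' where qs: "qs = q # qs'" by (cases qs) auto
  have "inR p (phi (blkw (p#ps)) v0)" using reg[of "p#ps"] Cons.prems by simp
  moreover have "inR q (phi (blkw (q#qs')) v0)" using reg[of "q#qs'"] Cons.prems qs by simp
  ultimately have pq: "p = q" using disj[of p q] Cons.prems qs by simp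
  have "phi (blk p) (phi (blkw ps) v0) = phi (blk p) (phi (blkw qs') v0)"
    using Cons.prems(4) qs pq by (simp add: phi_app)
  then have "phi (blkw ps) v0 = phi (blkw qs') v0" by (rule phi_inj)
  moreover have "length (blkw ps) = length (blkw qs')" using Cons.prems(3) qs pq by simp
  ultimately have "ps = qs'" using Cons.IH[of qs'] Cons.prems qs by simp
  then show ?case using qs pq by simp
qed

definition Seq :: "nat \<Rightarrow> nat list set" where
  "Seq k = {ps. set ps \<subseteq> {..<4} \<and> length (blkw ps) = k}"

lemma Seq_fin: "finite (Seq k)"
proof (rule finite_subset)
  show "Seq k \<subseteq> {ps. set ps \<subseteq> {..<4} \<and> length ps \<le> k}"
    unfolding Seq_def using len_blkw by fastforce
  show "finite {ps. set ps \<subseteq> {..<(4::nat)} \<and> length ps \<le> k}"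
    by (rule finite_lists_length_le) simp
qed

lemma Seq_rec:
  "(\<Sum>p\<in>{p. p < 4 \<and> length (blk p) \<le> k}. card (Seq (k - length (blk p)))) \<le> card (Seq k)"
proof -
  let ?I = "{p. p < 4 \<and> length (blk p) \<le> k}"
  have "(\<Sum>p\<in>?I. card (Seq (k - length (blk p)))) = (\<Sum>p\<in>?I. card ((Cons p) ` Seq (k - length (blk p))))"
    by (rule sum.cong[OF HOL.refl], rule card_image[symmetric]) (auto simp: inj_on_def)
  also have "\<dots> = card (\<Union>p\<in>?I. (Cons p) ` Seq (k - length (blk p)))"
    by (rule card_UN_disjoint[symmetric]) (auto intro: Seq_fin)
  also have "\<dots> \<le> card (Seq k)"
    by (rule card_mono[OF Seq_fin]) (auto simp: Seq_def)
  finally show ?thesis .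
qed

lemma Q0: "1 \<le> card (Seq 0)"
proof -
  have "[] \<in> Seq 0" by (simp add: Seq_def)
  then show ?thesis using Seq_fin[of 0] by (metis One_nat_def Suc_leI card_gt_0_iff empty_iff)
qed

lemma Q_ge4: "k \<ge> 4 \<Longrightarrow> card (Seq (k-2)) + 2 * card (Seq (k-3)) + card (Seq (k-4)) \<le> card (Seq k)"
proof -
  assume k: "k \<ge> 4"
  have "{p. p < 4 \<and> length (blk p) \<le> k} = {0,1,2,3}" using k blk_len by auto
  then show ?thesis using Seq_rec[of k] blk_len by (simp add: numeral_eq_Suc)
qed

lemma Q_rec4: "card (Seq (j+2)) + 2 * card (Seq (j+1)) + card (Seq j) \<le> card (Seq (j+4))"
proof -
  have e: "j + 4 - 2 = j + 2" "j + 4 - 3 = j + 1" "j + 4 - 4 = j" by simp_all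
  show ?thesis using Q_ge4[of "j+4"] unfolding e by simp
qed

lemma Q2: "1 \<le> card (Seq 2)"
proof -
  have "{p. p < 4 \<and> length (blk p) \<le> 2} = {0}" using blk_len four_cases by force
  then show ?thesis using Seq_rec[of 2] blk_len Q0 by simp
qed

lemma Q3: "2 \<le> card (Seq 3)"
proof -
  have "{p. p < 4 \<and> length (blk p) \<le> 3} = {0,1,2}" using blk_len four_cases by force
  then show ?thesis using Seq_rec[of 3] blk_len Q0 by simp
qed

lemma Q_lb: "k \<ge> 2 \<Longrightarrow> (8/5::real)^k/4 \<le> real (card (Seq k))"
proof (induction k rule: less_induct)
  case (less k)
  consider "k = 2" | "k = 3" | "k = 4" | "k = 5" | "k \<ge> 6" using less.prems by linarith
  then show ?case
  proof cases
    case 1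
    have "(1::real) \<le> card (Seq 2)" using Q2 by simp
    then show ?thesis using 1 by (simp add: power2_eq_square)
  next
    case 2
    have "(2::real) \<le> card (Seq 3)" using Q3 by simp
    moreover have "(8/5::real)^3/4 \<le> 2" by (simp add: power_divide)
    ultimately show ?thesis unfolding \<open>k = 3\<close> by linarith
  next
    case 3
    have e: "(4::nat)-2 = 2" "(4::nat)-3 = 1" "(4::nat)-4 = 0" by simp_all
    have q: "card (Seq (0+2)) + 2 * card (Seq (0+1)) + card (Seq 0) \<le> card (Seq (0+4))" by (rule Q_rec4)
    have "(0::nat)+2 = 2" "(0::nat)+1 = 1" "(0::nat)+4 = 4" by simp_all
    with q have "card (Seq 2) + 2 * card (Seq 1) + card (Seq 0) \<le> card (Seq 4)" by metis
    then have "2 \<le> card (Seq 4)" using Q2 Q0 by linarith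
    then have "(2::real) \<le> card (Seq 4)" by simp
    moreover have "(8/5::real)^4/4 \<le> 2" by (simp add: power_divide)
    ultimately show ?thesis unfolding \<open>k = 4\<close> by linarith
  next
    case 4
    have e: "(5::nat)-2 = 3" "(5::nat)-3 = 2" "(5::nat)-4 = 1" "(4::nat) \<le> 5" by simp_all
    have q: "card (Seq (1+2)) + 2 * card (Seq (1+1)) + card (Seq 1) \<le> card (Seq (1+4))" by (rule Q_rec4)
    have "(1::nat)+2 = 3" "(1::nat)+1 = 2" "(1::nat)+4 = 5" by simp_all
    with q have "card (Seq 3) + 2 * card (Seq 2) + card (Seq 1) \<le> card (Seq 5)" by metis
    then have "4 \<le> card (Seq 5)" using Q2 Q3 by linarith
    then have "(4::real) \<le> card (Seq 5)" by simp
    moreover have "(8/5::real)^5/4 \<le> 4" by (simp add: power_divide)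
    ultimately show ?thesis unfolding \<open>k = 5\<close> by linarith
  next
    case 5
    have a: "(8/5::real)^(k-2)/4 \<le> card (Seq (k-2))" using less.IH[of "k-2"] 5 by simp
    have b: "(8/5::real)^(k-3)/4 \<le> card (Seq (k-3))" using less.IH[of "k-3"] 5 by simp
    have c: "(8/5::real)^(k-4)/4 \<le> card (Seq (k-4))" using less.IH[of "k-4"] 5 by simp
    have r: "real (card (Seq (k-2))) + 2 * card (Seq (k-3)) + card (Seq (k-4)) \<le> card (Seq k)"
      using Q_ge4[of k] 5 by (simp flip: of_nat_add of_nat_mult)
    define j where "j = k - 4"
    have j: "k = j + 4" using 5 by (simp add: j_def)
    have e: "k - 2 = j + 2" "k - 3 = j + 1" "k - 4 = j" using j by auto
    define x where "x = (8/5::real)^j"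
    have x0: "0 \<le> x" by (simp add: x_def)
    have p4: "(8/5::real)^k = x * (4096/625)" unfolding j x_def by (simp only: power_add power_divide) simp
    have p2: "(8/5::real)^(k-2) = x * (64/25)" unfolding e x_def by (simp only: power_add power_divide) simp
    have p1: "(8/5::real)^(k-3) = x * (8/5)" unfolding e x_def by (simp only: power_add power_divide) simp
    have p0: "(8/5::real)^(k-4) = x" unfolding e x_def by simp
    show ?thesis using a b c r x0 unfolding p4 p2 p1 p0 by linarith
  qed
qed

lemma lower: "growth_rate 4 M > ereal (31/20)"
proof (rule rate_gt)
  fix k :: nat assume k: "k \<ge> 2"
  let ?E = "cox_elem 4 M ` {w \<in> cox_words 4. length w \<le> k}"
  let ?f = "\<lambda>ps. cox_elem 4 M (blkw ps)"
  have inj: "inj_on ?f (Seq k)"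
  proof (rule inj_onI)
    fix ps qs assume ps: "ps \<in> Seq k" and qs: "qs \<in> Seq k" and eq: "?f ps = ?f qs"
    have "blkw ps \<in> cox_words 4" using ps set_blkw by (auto simp: Seq_def cox_words_def)
    then have "blkw ps \<in> ?f ps" by (simp add: cox_elem_def cox_eq.refl)
    then have "blkw ps \<in> ?f qs" using eq by simp
    then have "cox_eq 4 M (blkw ps) (blkw qs)" by (simp add: cox_elem_def)
    then have "phi (blkw ps) v0 = phi (blkw qs) v0" using phi_eq by simp
    then show "ps = qs" using ps qs by (intro inj) (auto simp: Seq_def)
  qed
  have sub: "?f ` Seq k \<subseteq> ?E" using set_blkw by (auto simp: Seq_def cox_words_def)
  have "card (Seq k) \<le> card ?E"
    by (rule card_inj_on_le[OF inj sub]) (rule finite_imageI[OF finite_len_le])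
  also have "\<dots> \<le> (\<Sum>j\<le>k. growth_coeff 4 M j)" by (rule card_ball_le)
  finally have "real (card (Seq k)) \<le> real (\<Sum>j\<le>k. growth_coeff 4 M j)" by linarith
  then show "(8/5::real)^k/4 \<le> real (\<Sum>j\<le>k. growth_coeff 4 M j)" using Q_lb[OF k] by linarith
qed

end

definition F0 :: "nat list list" where
"F0 = [[0,0],[1,1],[2,0],[2,2],[3,0],[3,1],[3,3],[2,1,2],[3,2,3],[2,1,0,2],[3,2,1,3],[3,2,1,0,3],[2,1,0,1,2,1],[3,2,1,0,1,3]]"

definition enc :: "nat list \<Rightarrow> nat" where "enc w = foldl (\<lambda>a d. 4*a + d) 0 w"

lemma foldl_enc: "foldl (\<lambda>a d. 4*a + d) (x::nat) v = x * 4^length v + foldl (\<lambda>a d. 4*a + d) 0 v"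
proof (induction v arbitrary: x)
  case Nil then show ?case by simp
next
  case (Cons d v)
  have "foldl (\<lambda>a d. 4*a + d) x (d#v) = foldl (\<lambda>a d. 4*a + d) (4*x+d) v" by simp
  also have "\<dots> = (4*x+d) * 4^length v + foldl (\<lambda>a d. 4*a + d) 0 v" by (rule Cons.IH)
  also have "foldl (\<lambda>a d. 4*a + d) 0 (d#v) = d * 4^length v + foldl (\<lambda>a d. 4*a + d) 0 v"
    using Cons.IH[of d] by simp
  ultimately show ?case by (simp add: algebra_simps)
qed

lemma enc_append: "enc (u@v) = enc u * 4^length v + enc v"
  unfolding enc_def by (simp add: foldl_enc[of "foldl _ 0 u"])

lemma enc_mid: "length f' = length f \<Longrightarrow> enc f' < enc f \<Longrightarrow> enc (x@f'@y) < enc (x@f@y)"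
  by (simp add: enc_append algebra_simps)

lemma mW0: "m_W0 2 0 = 2" "m_W0 0 2 = 2" "m_W0 3 0 = 2" "m_W0 0 3 = 2" "m_W0 3 1 = 2" "m_W0 1 3 = 2"
  "m_W0 2 1 = 3" "m_W0 3 2 = 3"
  by (simp_all add: m_W0_def doubleton_eq_iff)

lemma step: "cox_eq n m l r \<Longrightarrow> a = x@l@y \<Longrightarrow> b = x@r@y \<Longrightarrow> cox_eq n m a b"
  using cox_eq_cong by blast

lemmas c20 = comm_eq[of 2 4 0 m_W0, simplified mW0, simplified]
lemmas c02 = comm_eq[of 0 4 2 m_W0, simplified mW0, simplified]
lemmas c30 = comm_eq[of 3 4 0 m_W0, simplified mW0, simplified]
lemmas c03 = comm_eq[of 0 4 3 m_W0, simplified mW0, simplified]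
lemmas c31 = comm_eq[of 3 4 1 m_W0, simplified mW0, simplified]
lemmas c13 = comm_eq[of 1 4 3 m_W0, simplified mW0, simplified]
lemmas b21 = braid_eq[of 2 4 1 m_W0, simplified mW0, simplified]
lemmas b12 = cox_eq.sym[OF b21]
lemmas b32 = braid_eq[of 3 4 2 m_W0, simplified mW0, simplified]

lemma repl: "f \<in> set F0 \<Longrightarrow> \<exists>f'. cox_eq 4 m_W0 f f' \<and> set f' \<subseteq> {..<4} \<and>
   (length f' < length f \<or> (length f' = length f \<and> enc f' < enc f))"
proof -
  assume "f \<in> set F0"
  then consider "f = [0,0]" | "f = [1,1]" | "f = [2,0]" | "f = [2,2]" | "f = [3,0]" | "f = [3,1]" | "f = [3,3]"
    | "f = [2,1,2]" | "f = [3,2,3]" | "f = [2,1,0,2]" | "f = [3,2,1,3]" | "f = [3,2,1,0,3]"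
    | "f = [2,1,0,1,2,1]" | "f = [3,2,1,0,1,3]" unfolding F0_def list.set insert_iff empty_iff by argo
  then show ?thesis
  proof cases
    case 1 then show ?thesis using del_eq[of 0 4 m_W0] by (intro exI[of _ "[]"]) simp
  next
    case 2 then show ?thesis using del_eq[of 1 4 m_W0] by (intro exI[of _ "[]"]) simp
  next
    case 3 then show ?thesis using c20 by (intro exI[of _ "[0,2]"]) (simp add: enc_def)
  next
    case 4 then show ?thesis using del_eq[of 2 4 m_W0] by (intro exI[of _ "[]"]) simp
  next
    case 5 then show ?thesis using c30 by (intro exI[of _ "[0,3]"]) (simp add: enc_def)
  next
    case 6 then show ?thesis using c31 by (intro exI[of _ "[1,3]"]) (simp add: enc_def)
  next
    case 7 then show ?thesis using del_eq[of 3 4 m_W0] by (intro exI[of _ "[]"]) simp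
  next
    case 8 then show ?thesis using b21 by (intro exI[of _ "[1,2,1]"]) (simp add: enc_def)
  next
    case 9 then show ?thesis using b32 by (intro exI[of _ "[2,3,2]"]) (simp add: enc_def)
  next
    case 10
    have "cox_eq 4 m_W0 [2,1,0,2] [2,1,2,0]" by (rule step[OF c02, of _ "[2,1]" "[]"]) simp_all
    moreover have "cox_eq 4 m_W0 [2,1,2,0] [1,2,1,0]" by (rule step[OF b21, of _ "[]" "[0]"]) simp_all
    ultimately show ?thesis using 10 by (intro exI[of _ "[1,2,1,0]"]) (auto simp: enc_def intro: cox_eq.trans)
  next
    case 11
    have "cox_eq 4 m_W0 [3,2,1,3] [3,2,3,1]" by (rule step[OF c13, of _ "[3,2]" "[]"]) simp_all
    moreover have "cox_eq 4 m_W0 [3,2,3,1] [2,3,2,1]" by (rule step[OF b32, of _ "[]" "[1]"]) simp_all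
    ultimately show ?thesis using 11 by (intro exI[of _ "[2,3,2,1]"]) (auto simp: enc_def intro: cox_eq.trans)
  next
    case 12
    have "cox_eq 4 m_W0 [3,2,1,0,3] [3,2,1,3,0]" by (rule step[OF c03, of _ "[3,2,1]" "[]"]) simp_all
    moreover have "cox_eq 4 m_W0 [3,2,1,3,0] [3,2,3,1,0]" by (rule step[OF c13, of _ "[3,2]" "[0]"]) simp_all
    moreover have "cox_eq 4 m_W0 [3,2,3,1,0] [2,3,2,1,0]" by (rule step[OF b32, of _ "[]" "[1,0]"]) simp_all
    ultimately show ?thesis using 12 by (intro exI[of _ "[2,3,2,1,0]"]) (auto simp: enc_def intro: cox_eq.trans)
  next
    case 13
    have "cox_eq 4 m_W0 [2,1,0,1,2,1] [2,1,0,2,1,2]" by (rule step[OF b12, of _ "[2,1,0]" "[]"]) simp_all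
    moreover have "cox_eq 4 m_W0 [2,1,0,2,1,2] [2,1,2,0,1,2]" by (rule step[OF c02, of _ "[2,1]" "[1,2]"]) simp_all
    moreover have "cox_eq 4 m_W0 [2,1,2,0,1,2] [1,2,1,0,1,2]" by (rule step[OF b21, of _ "[]" "[0,1,2]"]) simp_all
    ultimately show ?thesis using 13 by (intro exI[of _ "[1,2,1,0,1,2]"]) (auto simp: enc_def intro: cox_eq.trans)
  next
    case 14
    have "cox_eq 4 m_W0 [3,2,1,0,1,3] [3,2,1,0,3,1]" by (rule step[OF c13, of _ "[3,2,1,0]" "[]"]) simp_all
    moreover have "cox_eq 4 m_W0 [3,2,1,0,3,1] [3,2,1,3,0,1]" by (rule step[OF c03, of _ "[3,2,1]" "[1]"]) simp_all
    moreover have "cox_eq 4 m_W0 [3,2,1,3,0,1] [3,2,3,1,0,1]" by (rule step[OF c13, of _ "[3,2]" "[0,1]"]) simp_all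
    moreover have "cox_eq 4 m_W0 [3,2,3,1,0,1] [2,3,2,1,0,1]" by (rule step[OF b32, of _ "[]" "[1,0,1]"]) simp_all
    ultimately show ?thesis using 14 by (intro exI[of _ "[2,3,2,1,0,1]"]) (auto simp: enc_def intro: cox_eq.trans)
  qed
qed

definition strs :: "nat list list" where
"strs = [[],[0],[1],[2],[3],[2,1],[3,2],[2,1,0],[3,2,1],[2,1,0,1],[3,2,1,0],[2,1,0,1,2],[3,2,1,0,1]]"

definition dtab :: "nat option list list" where
"dtab = [[Some 1,Some 2,Some 3,Some 4],
 [None,Some 2,Some 3,Some 4],
 [Some 1,None,Some 3,Some 4],
 [None,Some 5,None,Some 4],
 [None,None,Some 6,None],
 [Some 7,None,None,Some 4],
 [None,Some 8,None,None],
 [None,Some 9,None,Some 4],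
 [Some 10,None,None,None],
 [Some 1,None,Some 11,Some 4],
 [None,Some 12,None,None],
 [None,None,None,Some 4],
 [Some 1,None,Some 11,None]]"

definition wts :: "nat list" where "wts = [1000, 605, 605, 242, 79, 291, 121, 366, 184, 481, 281, 52, 430]"

definition dl :: "nat \<Rightarrow> nat \<Rightarrow> nat option" where "dl q a = dtab ! q ! a"

definition is_sfx :: "nat list \<Rightarrow> nat list \<Rightarrow> bool" where
  "is_sfx f w = (length f \<le> length w \<and> drop (length w - length f) w = f)"

lemma is_sfx_ex: "is_sfx f w \<Longrightarrow> \<exists>z. w = z @ f"
  unfolding is_sfx_def by (metis append_take_drop_id)

definition chk :: "nat \<Rightarrow> nat \<Rightarrow> bool" where
  "chk q a = (case dl q a of None \<Rightarrow> list_ex (\<lambda>f. is_sfx f (strs!q @ [a])) F0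
      | Some q' \<Rightarrow> q' < 13 \<and> is_sfx (strs!q') (strs!q @ [a]))"

definition wchk :: "nat \<Rightarrow> bool" where
  "wchk q = (20 * sum_list (map (\<lambda>a. case dl q a of None \<Rightarrow> 0 | Some q' \<Rightarrow> wts!q') [0..<4]) \<le> 31 * wts!q
     \<and> 1 \<le> wts!q)"

lemma chk_all: "list_all (\<lambda>q. list_all (chk q) [0..<4]) [0..<13]"
  by code_simp

lemma wchk_all: "list_all wchk [0..<13]"
  by (simp add: wchk_def dl_def dtab_def wts_def upt_rec)

lemma chk': "q < 13 \<Longrightarrow> a < 4 \<Longrightarrow> chk q a"
  using chk_all by (auto simp: list_all_iff)

lemma wchk': "q < 13 \<Longrightarrow> wchk q"
  using wchk_all by (auto simp: list_all_iff)

fun acc :: "nat \<Rightarrow> nat list \<Rightarrow> bool" where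
  "acc q [] = True"
| "acc q (a#w) = (case dl q a of None \<Rightarrow> False | Some q' \<Rightarrow> acc q' w)"

lemma sound: "q < 13 \<Longrightarrow> u = z @ strs!q \<Longrightarrow> set w \<subseteq> {..<4} \<Longrightarrow> \<not> acc q w
   \<Longrightarrow> \<exists>x f y. u@w = x@f@y \<and> f \<in> set F0"
proof (induction w arbitrary: q u z)
  case Nil then show ?case by simp
next
  case (Cons a w)
  have a: "a < 4" using Cons.prems by simp
  have c: "chk q a" by (rule chk'[OF Cons.prems(1) a])
  show ?case
  proof (cases "dl q a")
    case None
    then obtain f where f: "f \<in> set F0" "is_sfx f (strs!q @ [a])" using c by (auto simp: chk_def list_ex_iff)
    then obtain z' where "strs!q @ [a] = z' @ f" using is_sfx_ex by blast
    then have "u @ a # w = (z @ z') @ f @ w" using Cons.prems(2) by simp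
    then show ?thesis using f by blast
  next
    case (Some q')
    then have q': "q' < 13" "is_sfx (strs!q') (strs!q @ [a])" using c by (auto simp: chk_def)
    then obtain z' where z': "strs!q @ [a] = z' @ strs!q'" using is_sfx_ex by blast
    have "\<not> acc q' w" using Cons.prems(4) Some by simp
    moreover have "u @ [a] = (z @ z') @ strs!q'" using Cons.prems(2) z' by simp
    moreover have "set w \<subseteq> {..<4}" using Cons.prems(3) by simp
    ultimately have "\<exists>x f y. (u @ [a]) @ w = x@f@y \<and> f \<in> set F0"
      by (intro Cons.IH[OF q'(1), of "u @ [a]" "z @ z'"])
    then obtain x f y where "(u @ [a]) @ w = x@f@y" "f \<in> set F0" by blast
    then show ?thesis by auto
  qed
qed

definition Acc :: "nat \<Rightarrow> nat \<Rightarrow> nat list set" where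
  "Acc q k = {w. set w \<subseteq> {..<4} \<and> length w = k \<and> acc q w}"

fun cnt :: "nat \<Rightarrow> nat \<Rightarrow> nat" where
  "cnt q 0 = 1"
| "cnt q (Suc k) = (\<Sum>a<4. case dl q a of None \<Rightarrow> 0 | Some q' \<Rightarrow> cnt q' k)"

lemma Acc_fin: "finite (Acc q k)"
proof (rule finite_subset)
  show "Acc q k \<subseteq> {w. set w \<subseteq> {..<4::nat} \<and> length w = k}" unfolding Acc_def by auto
  show "finite {w. set w \<subseteq> {..<4::nat} \<and> length w = k}" by (rule finite_lists_length_eq) simp
qed

lemma card_Acc: "card (Acc q k) \<le> cnt q k"
proof (induction k arbitrary: q)
  case 0
  have "Acc q 0 \<subseteq> {[]}" unfolding Acc_def by auto
  then show ?case by (simp add: card_mono subset_singletonD) (metis card.empty card_insert_disjoint empty_iff finite.emptyI le_refl subset_singletonD zero_le)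
next
  case (Suc k)
  define B where "B a = (case dl q a of None \<Rightarrow> {} | Some q' \<Rightarrow> (Cons a) ` Acc q' k)" for a
  have sub: "Acc q (Suc k) \<subseteq> (\<Union>a\<in>{..<4}. B a)"
  proof
    fix w assume "w \<in> Acc q (Suc k)"
    then obtain a w' where w: "w = a # w'" "a < 4" "set w' \<subseteq> {..<4}" "length w' = k" "acc q (a#w')"
      unfolding Acc_def by (cases w) auto
    then obtain q' where "dl q a = Some q'" "acc q' w'" by (cases "dl q a") auto
    then have "w \<in> B a" unfolding B_def Acc_def using w by auto
    then show "w \<in> (\<Union>a\<in>{..<4}. B a)" using w by auto
  qed
  have finB: "finite (B a)" for a unfolding B_def by (cases "dl q a") (auto intro: Acc_fin)
  have "card (Acc q (Suc k)) \<le> card (\<Union>a\<in>{..<4}. B a)" by (rule card_mono[OF _ sub]) (auto intro: finB)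
  also have "\<dots> \<le> (\<Sum>a<4. card (B a))" by (rule card_UN_le) simp
  also have "\<dots> \<le> (\<Sum>a<4. case dl q a of None \<Rightarrow> 0 | Some q' \<Rightarrow> cnt q' k)"
  proof (rule sum_mono)
    fix a assume "a \<in> {..<4::nat}"
    show "card (B a) \<le> (case dl q a of None \<Rightarrow> 0 | Some q' \<Rightarrow> cnt q' k)"
    proof (cases "dl q a")
      case None then show ?thesis by (simp add: B_def)
    next
      case (Some q')
      have "card (B a) \<le> card (Acc q' k)" unfolding B_def Some by (simp add: card_image_le Acc_fin)
      also have "\<dots> \<le> cnt q' k" by (rule Suc.IH)
      finally show ?thesis using Some by simp
    qed
  qed
  finally show ?case by simp
qed

lemma cnt_bound: "q < 13 \<Longrightarrow> cnt q k * 20^k \<le> wts!q * 31^k"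
proof (induction k arbitrary: q)
  case 0 then show ?case using wchk'[OF 0] by (simp add: wchk_def)
next
  case (Suc k)
  define g where "g a = (case dl q a of None \<Rightarrow> 0 | Some q' \<Rightarrow> wts!q')" for a
  have w: "20 * (\<Sum>a<4. g a) \<le> 31 * wts!q"
  proof -
    have "(\<Sum>a<4. g a) = sum_list (map g [0..<4])"
      by (simp only: interv_sum_list_conv_sum_set_nat set_upt atLeast0LessThan)
    then show ?thesis using wchk'[OF Suc.prems] unfolding wchk_def g_def by simp
  qed
  have t: "(case dl q a of None \<Rightarrow> 0 | Some q' \<Rightarrow> cnt q' k) * 20^k \<le> g a * 31^k" if "a < 4" for a
  proof (cases "dl q a")
    case None then show ?thesis by (simp add: g_def)
  next
    case (Some q')
    then have "q' < 13" using chk'[OF Suc.prems that] by (simp add: chk_def)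
    then show ?thesis using Suc.IH[of q'] Some by (simp add: g_def)
  qed
  have "cnt q (Suc k) * 20^Suc k = 20 * (\<Sum>a<4. (case dl q a of None \<Rightarrow> 0 | Some q' \<Rightarrow> cnt q' k) * 20^k)"
    by (simp add: sum_distrib_left mult.commute mult.left_commute)
  also have "\<dots> \<le> 20 * (\<Sum>a<4. g a * 31^k)"
    using t by (intro mult_left_mono sum_mono) auto
  also have "\<dots> = (20 * (\<Sum>a<4. g a)) * 31^k" by (simp add: sum_distrib_right)
  also have "\<dots> \<le> (31 * wts!q) * 31^k" using w by (rule mult_right_mono) simp
  finally show ?case by simp
qed

lemma min_rep:
  assumes w: "w \<in> cox_words 4" "length w = k" "\<forall>v\<in>cox_words 4. cox_eq 4 m_W0 v w \<longrightarrow> k \<le> length v"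
  shows "\<exists>v. v \<in> Acc 0 k \<and> cox_elem 4 m_W0 v = cox_elem 4 m_W0 w"
proof -
  define S where "S = {v \<in> cox_words 4. length v = k \<and> cox_eq 4 m_W0 v w}"
  define P where "P e = (\<exists>v\<in>S. enc v = e)" for e
  have "P (enc w)" unfolding P_def S_def using w cox_eq.refl by blast
  define e0 where "e0 = (LEAST e. P e)"
  have "P e0" unfolding e0_def by (rule LeastI, fact)
  then obtain v where v: "v \<in> S" "enc v = e0" unfolding P_def by blast
  have vs: "set v \<subseteq> {..<4}" using v(1) by (auto simp: S_def cox_words_def)
  have "acc 0 v"
  proof (rule ccontr)
    assume "\<not> acc 0 v"
    then obtain x f y where xfy: "[] @ v = x@f@y" "f \<in> set F0"
      using sound[of 0 "[]" "[]" v] vs by (auto simp: strs_def)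
    obtain f' where f': "cox_eq 4 m_W0 f f'" "set f' \<subseteq> {..<4}"
        "length f' < length f \<or> (length f' = length f \<and> enc f' < enc f)"
      using repl[OF xfy(2)] by blast
    define v' where "v' = x@f'@y"
    have "cox_eq 4 m_W0 v' v" unfolding v'_def using xfy(1) cox_eq_cong[OF cox_eq.sym[OF f'(1)]] by simp
    then have ev': "cox_eq 4 m_W0 v' w" using v(1) cox_eq.trans unfolding S_def by blast
    have v'w: "v' \<in> cox_words 4" using vs xfy(1) f'(2) by (auto simp: v'_def cox_words_def)
    show False
    proof (cases "length f' < length f")
      case True
      then have "length v' < k" using xfy(1) v(1) by (auto simp: v'_def S_def)
      then show False using w(3) v'w ev' by fastforce
    next
      case False
      then have l: "length f' = length f" "enc f' < enc f" using f'(3) by auto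
      then have "length v' = k" using xfy(1) v(1) by (auto simp: v'_def S_def)
      then have "P (enc v')" unfolding P_def S_def using v'w ev' by blast
      then have "e0 \<le> enc v'" unfolding e0_def by (rule Least_le)
      moreover have "enc v' < enc v" using enc_mid[OF l, of x y] xfy(1) by (simp add: v'_def)
      ultimately show False using v(2) by simp
    qed
  qed
  then have "v \<in> Acc 0 k" using vs v(1) by (auto simp: Acc_def S_def)
  moreover have "cox_elem 4 m_W0 v = cox_elem 4 m_W0 w" using v(1) cox_elem_eq by (auto simp: S_def)
  ultimately show ?thesis by blast
qed

lemma gc_W0: "growth_coeff 4 m_W0 k \<le> cnt 0 k"
proof -
  let ?Min = "{w \<in> cox_words 4. length w = k \<and> (\<forall>v \<in> cox_words 4. cox_eq 4 m_W0 v w \<longrightarrow> k \<le> length v)}"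
  have sub: "cox_elem 4 m_W0 ` ?Min \<subseteq> cox_elem 4 m_W0 ` Acc 0 k"
  proof
    fix e assume "e \<in> cox_elem 4 m_W0 ` ?Min"
    then obtain w where w: "w \<in> ?Min" "e = cox_elem 4 m_W0 w" by auto
    then obtain v where "v \<in> Acc 0 k" "cox_elem 4 m_W0 v = cox_elem 4 m_W0 w" using min_rep[of w k] by auto
    then show "e \<in> cox_elem 4 m_W0 ` Acc 0 k" using w(2) by (metis image_eqI)
  qed
  have "growth_coeff 4 m_W0 k \<le> card (cox_elem 4 m_W0 ` Acc 0 k)"
    unfolding growth_coeff_def by (rule card_mono[OF finite_imageI[OF Acc_fin] sub])
  also have "\<dots> \<le> card (Acc 0 k)" by (rule card_image_le[OF Acc_fin])
  also have "\<dots> \<le> cnt 0 k" by (rule card_Acc)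
  finally show ?thesis .
qed

lemma gc_W0_real: "real (growth_coeff 4 m_W0 k) \<le> 1000 * (31/20)^k"
proof -
  have w0: "wts!0 = 1000" by (simp add: wts_def)
  have "cnt 0 k * 20^k \<le> 1000 * 31^k" using cnt_bound[of 0 k] unfolding w0 by simp
  then have "real (cnt 0 k * 20^k) \<le> real (1000 * 31^k)" by (simp only: of_nat_le_iff)
  then have h: "real (cnt 0 k) * 20^k \<le> 1000 * 31^k" by (simp only: of_nat_mult of_nat_power of_nat_numeral)
  have p: "(0::real) < 20^k" by simp
  have "real (cnt 0 k) \<le> 1000 * 31^k / 20^k" using h p by (simp only: pos_le_divide_eq)
  also have "\<dots> = 1000 * (31/20)^k" by (simp only: power_divide times_divide_eq_right)
  finally have c: "real (cnt 0 k) \<le> 1000 * (31/20)^k" .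
  have "real (growth_coeff 4 m_W0 k) \<le> real (cnt 0 k)" using gc_W0[of k] by (simp only: of_nat_le_iff)
  then show ?thesis using c by (rule order_trans)
qed

lemma rate_W0: "growth_rate 4 m_W0 \<le> ereal (31/20)"
proof -
  have ev: "eventually (\<lambda>k. ereal (root k (real (growth_coeff 4 m_W0 k))) \<le> ereal (root k 1000 * (31/20))) sequentially"
    unfolding eventually_sequentially
  proof (intro exI allI impI)
    fix k :: nat assume "k \<ge> 1"
    then have k: "0 < k" by simp
    have "root k (real (growth_coeff 4 m_W0 k)) \<le> root k (1000 * (31/20)^k)"
      by (rule real_root_le_mono[OF k gc_W0_real])
    also have "\<dots> = root k 1000 * (31/20)" by (simp add: real_root_mult real_root_power_cancel k)
    finally show "ereal (root k (real (growth_coeff 4 m_W0 k))) \<le> ereal (root k 1000 * (31/20))" by simp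
  qed
  have lim: "(\<lambda>k. ereal (root k 1000 * (31/20))) \<longlonglongrightarrow> ereal (1 * (31/20))"
    by (intro tendsto_ereal tendsto_mult LIMSEQ_root_const tendsto_const) simp
  have "growth_rate 4 m_W0 \<le> limsup (\<lambda>k. ereal (root k 1000 * (31/20)))"
    unfolding growth_rate_def by (rule Limsup_mono[OF ev])
  also have "\<dots> = ereal (1 * (31/20))" by (rule lim_imp_Limsup[OF _ lim]) simp
  finally show ?thesis by simp
qed

fun act2 :: "nat \<Rightarrow> v4 \<Rightarrow> v4" where
"act2 s (a,b,c,d) = (if s = 0 then (-a, b+2*a, c, d) else if s = 1 then (a+2*b, -b, c+b, d+b)
   else if s = 2 then (a, b+c, -c, d) else if s = 3 then (a, b+d, c, -d) else (a,b,c,d))"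

definition phi2 :: "nat list \<Rightarrow> v4 \<Rightarrow> v4" where "phi2 w x = foldr act2 w x"

lemma phi2_rel: assumes "cox_rel 4 m_W2 r" shows "phi2 r x = x"
proof -
  obtain a b c d where x: "x = (a,b,c,d)" by (cases x) auto
  from assms consider (sq) s where "s < 4" "r = [s,s]"
    | (br) s t k where "s < 4" "t < 4" "s \<noteq> t" "m_W2 s t = enat k" "r = alt_word s t (2*k)"
    unfolding cox_rel_def by blast
  then show ?thesis
  proof cases
    case sq then show ?thesis using four_cases[of s] by (auto simp: phi2_def x)
  next
    case br
    from br(1,2,3) have st: "(s,t) \<in> {(0,1),(0,2),(0,3),(1,0),(1,2),(1,3),(2,0),(2,1),(2,3),(3,0),(3,1),(3,2)}"
      using four_cases[of s] four_cases[of t] by auto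
    then have "k = 2 \<or> k = 3" using br(4)
      by (auto simp: m_W2_def doubleton_eq_iff numeral_eq_enat)
    with st show ?thesis using br(4,5)
      by (auto simp: phi2_def x m_W2_def doubleton_eq_iff numeral_eq_enat eval_nat_numeral algebra_simps)
  qed
qed

lemma phi2_append: "phi2 (u@v) x = phi2 u (phi2 v x)" by (simp add: phi2_def)

lemma phi2_eq: "cox_eq 4 m_W2 u v \<Longrightarrow> phi2 u = phi2 v"
proof (induction rule: cox_eq.induct)
  case (rel r u v) then show ?case using phi2_rel[OF rel] by (auto simp: phi2_append fun_eq_iff)
qed auto

fun inR2 :: "nat \<Rightarrow> v4 \<Rightarrow> bool" where
"inR2 p (a,b,c,d) = (if p = 0 then 2*a+b+c>0 \<and> 2*a+b+d>0 \<and> b>0 \<and> c>0 \<and> d>0 \<and> a+b>0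
  else if p = 1 then -2*a-b-c>0 \<and> 2*a+b+d>0 \<and> c>0 \<and> 3*a+2*b+c>0
  else if p = 2 then 2*a+b+c>0 \<and> -2*a-b-d>0 \<and> d>0 \<and> 3*a+2*b+d>0
  else -2*a-b-c>0 \<and> -2*a-b-d>0 \<and> 2*a+b+c+d>0 \<and> 4*a+3*b>0)"

definition blk2 :: "nat \<Rightarrow> nat list" where
"blk2 p = (if p = 0 then [0,1] else if p = 1 then [0,1,2] else if p = 2 then [0,1,3] else [0,1,2,3])"

lemma pp2_img: assumes "p < 4" "q < 4" "inR2 q x" shows "inR2 p (phi2 (blk2 p) x)"
proof -
  obtain a b c d where x: "x = (a,b,c,d)" by (cases x) auto
  show ?thesis using four_cases[OF assms(1)] four_cases[OF assms(2)] assms(3)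
    by (auto simp: x phi2_def blk2_def)
qed

lemma pp2_v0: assumes "p < 4" shows "inR2 p (phi2 (blk2 p) (1,1,1,1))"
  using four_cases[OF assms(1)] by (auto simp: phi2_def blk2_def)

lemma pp2_disj: assumes "p < 4" "q < 4" "inR2 p x" "inR2 q x" shows "p = q"
proof -
  obtain a b c d where x: "x = (a,b,c,d)" by (cases x) auto
  show ?thesis using four_cases[OF assms(1)] four_cases[OF assms(2)] assms(3,4)
    by (auto simp: x)
qed

interpretation PP1: pingpong m_W1 phi1 blk1 inR1 "(1,1,1,1)"
proof
  show "\<And>u v. cox_eq 4 m_W1 u v \<Longrightarrow> phi1 u = phi1 v" by (rule phi1_eq)
  show "\<And>u v x. phi1 (u@v) x = phi1 u (phi1 v x)" by (rule phi1_append)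
  show "\<And>x. phi1 [] x = x" by (simp add: phi1_def)
  show "\<And>s x. phi1 [s] (phi1 [s] x) = x" by (auto simp: phi1_def split: prod.splits)
  show "length (blk1 0) = 2" "length (blk1 1) = 3" "length (blk1 2) = 3" "length (blk1 3) = 4"
    by (simp_all add: blk1_def)
  show "\<And>p. p < 4 \<Longrightarrow> set (blk1 p) \<subseteq> {..<4}" by (auto simp: blk1_def)
  show "\<And>p q x. p < 4 \<Longrightarrow> q < 4 \<Longrightarrow> inR1 q x \<Longrightarrow> inR1 p (phi1 (blk1 p) x)" by (rule pp1_img)
  show "\<And>p. p < 4 \<Longrightarrow> inR1 p (phi1 (blk1 p) (1,1,1,1))" by (rule pp1_v0)
  show "\<And>p q x. p < 4 \<Longrightarrow> q < 4 \<Longrightarrow> inR1 p x \<Longrightarrow> inR1 q x \<Longrightarrow> p = q" by (rule pp1_disj)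
qed

interpretation PP2: pingpong m_W2 phi2 blk2 inR2 "(1,1,1,1)"
proof
  show "\<And>u v. cox_eq 4 m_W2 u v \<Longrightarrow> phi2 u = phi2 v" by (rule phi2_eq)
  show "\<And>u v x. phi2 (u@v) x = phi2 u (phi2 v x)" by (rule phi2_append)
  show "\<And>x. phi2 [] x = x" by (simp add: phi2_def)
  show "\<And>s x. phi2 [s] (phi2 [s] x) = x" by (auto simp: phi2_def split: prod.splits)
  show "length (blk2 0) = 2" "length (blk2 1) = 3" "length (blk2 2) = 3" "length (blk2 3) = 4"
    by (simp_all add: blk2_def)
  show "\<And>p. p < 4 \<Longrightarrow> set (blk2 p) \<subseteq> {..<4}" by (auto simp: blk2_def)
  show "\<And>p q x. p < 4 \<Longrightarrow> q < 4 \<Longrightarrow> inR2 q x \<Longrightarrow> inR2 p (phi2 (blk2 p) x)" by (rule pp2_img)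
  show "\<And>p. p < 4 \<Longrightarrow> inR2 p (phi2 (blk2 p) (1,1,1,1))" by (rule pp2_v0)
  show "\<And>p q x. p < 4 \<Longrightarrow> q < 4 \<Longrightarrow> inR2 p x \<Longrightarrow> inR2 q x \<Longrightarrow> p = q" by (rule pp2_disj)
qed

theorem lemma3p1:
  shows "growth_rate 4 m_W0 < growth_rate 4 m_W1 \<and> growth_rate 4 m_W0 < growth_rate 4 m_W2"
  using rate_W0 PP1.lower PP2.lower by (meson le_less_trans)

end
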